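(* Let $U$ be any finite set in a commutative group $G$ and $1<p<\infty$. Then \[ \beta_p(U)=\gamma_p(1_U),\qquad \beta'(U)=\gamma'(1_U),\qquad \beta''(U)=\gamma''(1_U). \]
   Context: Set functionals (with $A,B$ ranging over nonempty finite subsets of $G$): $\beta_p(U)=\inf_{A,B}\frac{|A+B+U|}{|A|^{1/p}|B|^{1-1/p}}$; $\beta'(U)=\inf_{A,B,|A|=|B|}\frac{|A+B+U|}{\sqrt{|A||B|}}$; $\beta''(U)=\inf_A\frac{|A+A+U|}{|A|}$. Functional versions: for nonnegative functions $f,g$ on $G$, the max-convolution is $(f\star g)(x)=\max_t f(t)g(x-t)$. For $t>0$ the level set of $f$ is $\{x: f(x)\ge t\}$ and its distribution function is $F(t)=|\{x:f(x)\ge t\}|$; $f\sim g$ (identically distributed) means their distribution functions coincide. For nonnegative $f\in\ell^1(G)$ and $q$ with $1/p+1/q=1$, with $g,h$ ranging over nonzero nonnegative functions in $\ell^1(G)$: $\gamma_p(f)=\inf_{g,h}\frac{\|f\star g\star h\|_1}{\|g\|_p\|h\|_q}$; $\gamma'(f)=\inf_{g\sim h}\frac{\|f\star g\star h\|_1}{\|g\|_2\|h\|_2}$; $\gamma''(f)=\inf_g\frac{\|f\star g\star g\|_1}{\|g\|_2^2}$. $1_U$ is the indicator function of $U$. *)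

theory Defs
  imports "HOL-Analysis.Analysis"
begin

definition sumset :: "'a::ab_group_add set \<Rightarrow> 'a set \<Rightarrow> 'a set" where
  "sumset A B = {a + b | a b. a \<in> A \<and> b \<in> B}"

definition beta_p :: "real \<Rightarrow> 'a::ab_group_add set \<Rightarrow> real" where
  "beta_p p U = Inf {real (card (sumset (sumset A B) U)) /
      (real (card A) powr (1/p) * real (card B) powr (1 - 1/p)) | A B.
      finite A \<and> A \<noteq> {} \<and> finite B \<and> B \<noteq> {}}"

definition beta' :: "'a::ab_group_add set \<Rightarrow> real" where
  "beta' U = Inf {real (card (sumset (sumset A B) U)) / sqrt (real (card A) * real (card B)) | A B.
      finite A \<and> A \<noteq> {} \<and> finite B \<and> B \<noteq> {} \<and> card A = card B}"

definition beta'' :: "'a::ab_group_add set \<Rightarrow> real" where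
  "beta'' U = Inf {real (card (sumset (sumset A A) U)) / real (card A) | A.
      finite A \<and> A \<noteq> {}}"

text \<open>Max-convolution; for nonnegative l1 functions the supremum is attained (a maximum).\<close>
definition maxconv :: "('a::ab_group_add \<Rightarrow> real) \<Rightarrow> ('a \<Rightarrow> real) \<Rightarrow> 'a \<Rightarrow> real" where
  "maxconv f g x = (SUP t. f t * g (x - t))"

definition norm1 :: "('a \<Rightarrow> real) \<Rightarrow> real" where
  "norm1 f = infsum f UNIV"

definition lpnorm :: "real \<Rightarrow> ('a \<Rightarrow> real) \<Rightarrow> real" where
  "lpnorm p g = (infsum (\<lambda>x. g x powr p) UNIV) powr (1/p)"

definition admissible :: "('a \<Rightarrow> real) \<Rightarrow> bool" where
  "admissible g \<longleftrightarrow> (\<forall>x. 0 \<le> g x) \<and> g summable_on UNIV \<and> g \<noteq> (\<lambda>_. 0)"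

definition ident_distrib :: "('a \<Rightarrow> real) \<Rightarrow> ('a \<Rightarrow> real) \<Rightarrow> bool" where
  "ident_distrib g h \<longleftrightarrow> (\<forall>t>0. card {x. t \<le> g x} = card {x. t \<le> h x})"

definition gamma_p :: "real \<Rightarrow> ('a::ab_group_add \<Rightarrow> real) \<Rightarrow> real" where
  "gamma_p p f = (let q = p / (p - 1) in
     Inf {norm1 (maxconv (maxconv f g) h) / (lpnorm p g * lpnorm q h) | g h.
          admissible g \<and> admissible h})"

definition gamma' :: "('a::ab_group_add \<Rightarrow> real) \<Rightarrow> real" where
  "gamma' f = Inf {norm1 (maxconv (maxconv f g) h) / (lpnorm 2 g * lpnorm 2 h) | g h.
          admissible g \<and> admissible h \<and> ident_distrib g h}"

definition gamma'' :: "('a::ab_group_add \<Rightarrow> real) \<Rightarrow> real" where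
  "gamma'' f = Inf {norm1 (maxconv (maxconv f g) g) / (lpnorm 2 g) ^ 2 | g. admissible g}"

end

theory Submission
  imports Defs
begin

lemma amgm:
  fixes r a b :: real
  assumes "0 < r" "r < 1" "0 \<le> a" "0 \<le> b"
  shows "a powr r * b powr (1-r) \<le> r*a + (1-r)*b"
proof (cases "a = 0 \<or> b = 0")
  case True then show ?thesis using assms by auto
next
  case False then show ?thesis using Youngs_inequality_0[of r "1-r" a b] assms by auto
qed

lemma superadd:
  fixes r u v x y :: real
  assumes r: "0 < r" "r < 1" and nn: "0\<le>u" "0\<le>v" "0\<le>x" "0\<le>y"
  shows "u powr r * v powr (1-r) + x powr r * y powr (1-r) \<le> (u+x) powr r * (v+y) powr (1-r)"
proof (cases "u + x = 0 \<or> v + y = 0")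
  case True
  then have "(u = 0 \<and> x = 0) \<or> (v = 0 \<and> y = 0)" using nn by auto
  then show ?thesis using r by auto
next
  case False
  define U where "U = u + x"
  define V where "V = v + y"
  have U: "U > 0" and V: "V > 0" using False nn U_def V_def by auto
  define K where "K = U powr r * V powr (1-r)"
  have K: "K \<ge> 0" unfolding K_def by simp
  have e1: "u powr r * v powr (1-r) = K * ((u/U) powr r * (v/V) powr (1-r))"
    using U V nn unfolding K_def by (simp add: powr_divide)
  have e2: "x powr r * y powr (1-r) = K * ((x/U) powr r * (y/V) powr (1-r))"
    using U V nn unfolding K_def by (simp add: powr_divide)
  have "u powr r * v powr (1-r) \<le> K * (r*(u/U) + (1-r)*(v/V))"
    unfolding e1 by (rule mult_left_mono[OF amgm K]) (use r nn U V in auto)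
  moreover have "x powr r * y powr (1-r) \<le> K * (r*(x/U) + (1-r)*(y/V))"
    unfolding e2 by (rule mult_left_mono[OF amgm K]) (use r nn U V in auto)
  moreover have "K * (r*(u/U) + (1-r)*(v/V)) + K * (r*(x/U) + (1-r)*(y/V)) = K"
  proof -
    have "r*(u/U) + (1-r)*(v/V) + (r*(x/U) + (1-r)*(y/V)) = r * ((u+x)/U) + (1-r)*((v+y)/V)"
      using U V by (simp add: field_simps)
    also have "\<dots> = 1" using U V U_def V_def by simp
    finally show ?thesis by (simp add: distrib_left[symmetric])
  qed
  ultimately show ?thesis unfolding K_def U_def V_def by linarith
qed

lemma piece_ident:
  fixes a g h c r :: real
  assumes r: "0 < r" "r < 1" and a: "0 \<le> a" and g: "0 < g" and h: "0 < h" and c: "0 < c"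
  shows "g * h * ((a / g powr (1/r)) powr r * (a / (c * h powr (1/(1-r)))) powr (1-r))
         = c powr (-(1-r)) * a"
proof -
  have 1: "(a / g powr (1/r)) powr r = a powr r / g"
    using r a g by (simp add: powr_divide powr_powr)
  have 2: "(a / (c * h powr (1/(1-r)))) powr (1-r) = a powr (1-r) / (c powr (1-r) * h)"
    using r a h c by (simp add: powr_divide powr_powr powr_mult)
  have 3: "a powr r * a powr (1-r) = a"
    using a by (simp add: powr_add[symmetric])
  have 4: "c powr (1-r) * c powr (r-1) = 1"
    using c by (simp add: powr_add[symmetric])
  show ?thesis unfolding 1 2 using g h c 3 4
    by (simp add: powr_minus field_simps)
qed

lemma powr_mono_both:
  fixes r u v u' v' :: real
  assumes "0 < r" "r < 1" "0 \<le> u" "u \<le> u'" "0 \<le> v" "v \<le> v'"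
  shows "u powr r * v powr (1-r) \<le> u' powr r * v' powr (1-r)"
  using assms by (intro mult_mono powr_mono2) auto

lemma sum_split_chain:
  fixes F :: "'a \<Rightarrow> real"
  assumes "finite T" "S0 \<subseteq> S1" "S1 \<subseteq> T" "\<And>x. x \<in> S1 \<Longrightarrow> l \<le> F x"
  shows "l * (real (card S1) - real (card S0)) + (\<Sum>x\<in>T - S1. F x) \<le> (\<Sum>x\<in>T - S0. F x)"
proof -
  have fin1: "finite S1" using assms finite_subset by blast
  have "T - S0 = (S1 - S0) \<union> (T - S1)" using assms by blast
  then have "(\<Sum>x\<in>T - S0. F x) = (\<Sum>x\<in>S1 - S0. F x) + (\<Sum>x\<in>T - S1. F x)"
    using assms fin1 by (simp add: sum.union_disjoint Diff_Int_distrib2 Int_Diff)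
  moreover have "real (card (S1 - S0)) * l \<le> (\<Sum>x\<in>S1 - S0. F x)"
    by (rule sum_bounded_below) (use assms in auto)
  moreover have "real (card (S1 - S0)) = real (card S1) - real (card S0)"
    using assms fin1 by (simp add: card_Diff_subset finite_subset card_mono of_nat_diff)
  ultimately show ?thesis by (simp add: mult.commute)
qed

lemma core_p:
  fixes F :: "'a \<Rightarrow> real" and S :: "nat \<Rightarrow> nat \<Rightarrow> 'a set" and gv hv :: "nat \<Rightarrow> real"
    and m n :: nat and b r c :: real
  assumes r: "0 < r" "r < 1"
    and Fnn: "\<And>x. 0 \<le> F x"
    and Sfin: "\<And>i j. finite (S i j)"
    and Smono: "\<And>i j i' j'. i \<le> i' \<Longrightarrow> j \<le> j' \<Longrightarrow> S i j \<subseteq> S i' j'"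
    and FS: "\<And>i j x. i < m \<Longrightarrow> j < n \<Longrightarrow> x \<in> S i j \<Longrightarrow> gv i * hv j \<le> F x"
    and cardS: "\<And>i j. i < m \<Longrightarrow> j < n \<Longrightarrow>
        b * (real (Suc i) powr r * real (Suc j) powr (1-r)) \<le> real (card (S i j))"
    and gpos: "\<And>i. i < m \<Longrightarrow> 0 < gv i"
    and gdec: "\<And>i i'. i \<le> i' \<Longrightarrow> i' < m \<Longrightarrow> gv i' \<le> gv i"
    and hpos: "\<And>j. j < n \<Longrightarrow> 0 < hv j"
    and hdec: "\<And>j j'. j \<le> j' \<Longrightarrow> j' < n \<Longrightarrow> hv j' \<le> hv j"
    and b: "0 \<le> b" and c: "0 < c"
    and mass: "(\<Sum>i<m. gv i powr (1/r)) = (\<Sum>j<n. c * hv j powr (1/(1-r)))"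
    and mn: "0 < m" "0 < n"
  shows "b * c powr (-(1-r)) * (\<Sum>i<m. gv i powr (1/r)) \<le> (\<Sum>x\<in>S (m-1) (n-1). F x)"
proof -
  define \<alpha> where "\<alpha> i = gv i powr (1/r)" for i
  define \<beta> where "\<beta> j = c * hv j powr (1/(1-r))" for j
  define f where "f u v = u powr r * v powr (1-r)" for u v :: real
  define T where "T = S (m-1) (n-1)"
  define C where "C = c powr (-(1-r))"
  have apos: "0 < \<alpha> i" if "i < m" for i using gpos[OF that] unfolding \<alpha>_def by simp
  have bpos: "0 < \<beta> j" if "j < n" for j using hpos[OF that] c unfolding \<beta>_def by simp
  have Tfin: "finite T" unfolding T_def by (rule Sfin)
  have ST: "S i j \<subseteq> T" if "i < m" "j < n" for i j
    unfolding T_def by (rule Smono) (use that in auto)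
  have fnn: "0 \<le> f u v" for u v unfolding f_def by simp
  have main: "b * C * (ra + (\<Sum>i'\<in>{Suc i..<m}. \<alpha> i'))
      - gv i * hv j * (real (card S0) - b * f (real (Suc i) - ra/\<alpha> i) (real (Suc j) - rb/\<beta> j))
      \<le> (\<Sum>x\<in>T - S0. F x)"
    if "(m - i) + (n - j) = k" "i<m" "j<n" "0 \<le> ra" "ra \<le> \<alpha> i" "0 \<le> rb" "rb \<le> \<beta> j"
       "ra + (\<Sum>i'\<in>{Suc i..<m}. \<alpha> i') = rb + (\<Sum>j'\<in>{Suc j..<n}. \<beta> j')"
       "S0 \<subseteq> S i j"
       "b * f (real (Suc i) - ra/\<alpha> i) (real (Suc j) - rb/\<beta> j) \<le> real (card S0)"
     for k i j ra rb S0
    using that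
  proof (induction k arbitrary: i j ra rb S0)
    case 0
    then show ?case by auto
  next
    case (Suc k)
    note hyp = Suc.prems
    define l where "l = gv i * hv j"
    define u where "u = real (Suc i) - ra/\<alpha> i"
    define v where "v = real (Suc j) - rb/\<beta> j"
    have ai: "0 < \<alpha> i" using apos hyp by auto
    have bj: "0 < \<beta> j" using bpos hyp by auto
    have u0: "real i \<le> u" "u \<le> real (Suc i)" using hyp ai unfolding u_def by (auto simp: field_simps)
    have v0: "real j \<le> v" "v \<le> real (Suc j)" using hyp bj unfolding v_def by (auto simp: field_simps)
    have q1: "ra / \<alpha> i \<le> 1" using hyp(5) ai by simp
    have q2: "rb / \<beta> j \<le> 1" using hyp(7) bj by simp
    have l0: "0 \<le> l" unfolding l_def using gpos hpos hyp by (simp add: less_imp_le)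
    have split: "l * (real (card (S i j)) - real (card S0)) + (\<Sum>x\<in>T - S i j. F x) \<le> (\<Sum>x\<in>T - S0. F x)"
      by (rule sum_split_chain) (use Tfin hyp ST FS in \<open>auto simp: l_def\<close>)
    have cS1: "b * f (real (Suc i)) (real (Suc j)) \<le> real (card (S i j))"
      using cardS hyp unfolding f_def by auto
    have sumnn: "0 \<le> (\<Sum>x\<in>A. F x)" for A using Fnn by (simp add: sum_nonneg)
    have Snn: "0 \<le> (\<Sum>i'\<in>A. \<alpha> i')" if "A \<subseteq> {..<m}" for A
      using apos that by (intro sum_nonneg) (auto intro: less_imp_le)
    show ?case
    proof (cases "ra \<le> rb")
      case True
      define v' where "v' = v + ra / \<beta> j"
      have v'le: "v' \<le> real (Suc j)" using hyp bj True unfolding v'_def v_def by (auto simp: field_simps)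
      have superf: "f u v + f (ra/\<alpha> i) (ra/\<beta> j) \<le> f (real (Suc i)) v'"
        unfolding f_def v'_def
        using superadd[OF r, of u v "ra/\<alpha> i" "ra/\<beta> j"] u0 v0 hyp ai bj q1 q2
        by (simp add: u_def)
      have ident: "l * f (ra/\<alpha> i) (ra/\<beta> j) = C * ra"
        unfolding l_def f_def C_def \<alpha>_def \<beta>_def
        using piece_ident[OF r, of ra "gv i" "hv j" c] hyp gpos hpos c by auto
      have fmono: "f (real (Suc i)) v' \<le> f (real (Suc i)) (real (Suc j))"
        unfolding f_def using v'le v0 hyp bj r unfolding v'_def
        by (intro powr_mono_both) (auto intro: add_nonneg_nonneg)
      have D0: "0 \<le> real (card (S i j)) - b * f (real (Suc i)) v'"
        using cS1 fmono b mult_left_mono by fastforce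
      have rest: "b * C * (\<Sum>i'\<in>{Suc i..<m}. \<alpha> i') - l * (real (card (S i j)) - b * f (real (Suc i)) v')
               \<le> (\<Sum>x\<in>T - S i j. F x)"
      proof (cases "Suc i < m")
        case True2: True
        have IH: "b * C * (\<alpha> (Suc i) + (\<Sum>i'\<in>{Suc (Suc i)..<m}. \<alpha> i'))
            - gv (Suc i) * hv j * (real (card (S i j)) - b * f (real (Suc (Suc i)) - \<alpha> (Suc i)/\<alpha> (Suc i)) (real (Suc j) - (rb - ra)/\<beta> j))
            \<le> (\<Sum>x\<in>T - S i j. F x)"
        proof (rule Suc.IH)
          show "m - Suc i + (n - j) = k" using hyp True2 by auto
          show "0 \<le> \<alpha> (Suc i)" using apos True2 by (simp add: less_imp_le)
          show "(\<alpha> (Suc i)) + (\<Sum>i'\<in>{Suc (Suc i)..<m}. \<alpha> i') = rb - ra + (\<Sum>j'\<in>{Suc j..<n}. \<beta> j')"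
            using hyp(8) True2 by (simp add: sum.atLeast_Suc_lessThan)
          show "S i j \<subseteq> S (Suc i) j" by (rule Smono) auto
          have "real (Suc (Suc i)) - \<alpha> (Suc i)/\<alpha> (Suc i) = real (Suc i)" using apos[OF True2] by simp
          moreover have "real (Suc j) - (rb - ra)/\<beta> j = v'" unfolding v'_def v_def using bj by (simp add: field_simps)
          ultimately show "b * f (real (Suc (Suc i)) - \<alpha> (Suc i)/\<alpha> (Suc i)) (real (Suc j) - (rb - ra)/\<beta> j) \<le> real (card (S i j))"
            using D0 by simp
        qed (use hyp True True2 in auto)
        have e1: "real (Suc (Suc i)) - \<alpha> (Suc i)/\<alpha> (Suc i) = real (Suc i)" using apos[OF True2] by simp
        have e2: "real (Suc j) - (rb - ra)/\<beta> j = v'" unfolding v'_def v_def using bj by (simp add: field_simps)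
        have e3: "\<alpha> (Suc i) + (\<Sum>i'\<in>{Suc (Suc i)..<m}. \<alpha> i') = (\<Sum>i'\<in>{Suc i..<m}. \<alpha> i')"
          using True2 by (simp add: sum.atLeast_Suc_lessThan)
        have lle: "gv (Suc i) * hv j \<le> l" unfolding l_def
          using gdec[of i "Suc i"] True2 hpos[of j] hyp by (intro mult_right_mono) auto
        have "gv (Suc i) * hv j * (real (card (S i j)) - b * f (real (Suc i)) v') \<le> l * (real (card (S i j)) - b * f (real (Suc i)) v')"
          using lle D0 by (rule mult_right_mono)
        then show ?thesis using IH unfolding e1 e2 e3 by linarith
      next
        case False
        then have "{Suc i..<m} = {}" by auto
        moreover have "0 \<le> l * (real (card (S i j)) - b * f (real (Suc i)) v')"
          using l0 D0 by simp
        ultimately show ?thesis using sumnn[of "T - S i j"] by simp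
      qed
      have "b * (l * f (real (Suc i)) v') \<ge> b * (l * f u v) + b * (C * ra)"
      proof -
        have "l * f (real (Suc i)) v' \<ge> l * f u v + C * ra"
          using mult_left_mono[OF superf l0] ident by (simp add: distrib_left)
        then show ?thesis using b by (metis distrib_left mult_left_mono)
      qed
      then show ?thesis
        using split rest unfolding u_def[symmetric] v_def[symmetric] l_def[symmetric]
        by (simp add: algebra_simps)
    next
      case False
      define u' where "u' = u + rb / \<alpha> i"
      have u'le: "u' \<le> real (Suc i)" using hyp ai False unfolding u'_def u_def by (auto simp: field_simps)
      have jn: "Suc j < n"
      proof (rule ccontr)
        assume "\<not> Suc j < n"
        then have "{Suc j..<n} = {}" by auto
        then have "ra + (\<Sum>i'\<in>{Suc i..<m}. \<alpha> i') = rb" using hyp(8) by simp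
        moreover have "0 \<le> (\<Sum>i'\<in>{Suc i..<m}. \<alpha> i')" by (rule Snn) auto
        ultimately show False using False by linarith
      qed
      have superf: "f u v + f (rb/\<alpha> i) (rb/\<beta> j) \<le> f u' (real (Suc j))"
        unfolding f_def u'_def
        using superadd[OF r, of u v "rb/\<alpha> i" "rb/\<beta> j"] u0 v0 hyp ai bj q1 q2
        by (simp add: v_def)
      have ident: "l * f (rb/\<alpha> i) (rb/\<beta> j) = C * rb"
        unfolding l_def f_def C_def \<alpha>_def \<beta>_def
        using piece_ident[OF r, of rb "gv i" "hv j" c] hyp gpos hpos c by auto
      have fmono: "f u' (real (Suc j)) \<le> f (real (Suc i)) (real (Suc j))"
        unfolding f_def using u'le u0 hyp ai r unfolding u'_def
        by (intro powr_mono_both) (auto intro: add_nonneg_nonneg)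
      have D0: "0 \<le> real (card (S i j)) - b * f u' (real (Suc j))"
        using cS1 fmono b mult_left_mono by fastforce
      have IH: "b * C * ((ra - rb) + (\<Sum>i'\<in>{Suc i..<m}. \<alpha> i'))
            - gv i * hv (Suc j) * (real (card (S i j)) - b * f (real (Suc i) - (ra - rb)/\<alpha> i) (real (Suc (Suc j)) - \<beta> (Suc j)/\<beta> (Suc j)))
            \<le> (\<Sum>x\<in>T - S i j. F x)"
      proof (rule Suc.IH)
        show "m - i + (n - Suc j) = k" using hyp jn by auto
        show "0 \<le> \<beta> (Suc j)" using bpos jn by (simp add: less_imp_le)
        show "ra - rb + (\<Sum>i'\<in>{Suc i..<m}. \<alpha> i') = \<beta> (Suc j) + (\<Sum>j'\<in>{Suc (Suc j)..<n}. \<beta> j')"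
          using hyp(8) jn by (simp add: sum.atLeast_Suc_lessThan)
        show "S i j \<subseteq> S i (Suc j)" by (rule Smono) auto
        have "real (Suc (Suc j)) - \<beta> (Suc j)/\<beta> (Suc j) = real (Suc j)" using bpos[OF jn] by simp
        moreover have "real (Suc i) - (ra - rb)/\<alpha> i = u'" unfolding u'_def u_def using ai by (simp add: field_simps)
        ultimately show "b * f (real (Suc i) - (ra - rb)/\<alpha> i) (real (Suc (Suc j)) - \<beta> (Suc j)/\<beta> (Suc j)) \<le> real (card (S i j))"
          using D0 by simp
      qed (use hyp False jn in auto)
      have e1: "real (Suc (Suc j)) - \<beta> (Suc j)/\<beta> (Suc j) = real (Suc j)" using bpos[OF jn] by simp
      have e2: "real (Suc i) - (ra - rb)/\<alpha> i = u'" unfolding u'_def u_def using ai by (simp add: field_simps)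
      have lle: "gv i * hv (Suc j) \<le> l" unfolding l_def
        using hdec[of j "Suc j"] jn gpos[of i] hyp by (intro mult_left_mono) auto
      have "gv i * hv (Suc j) * (real (card (S i j)) - b * f u' (real (Suc j))) \<le> l * (real (card (S i j)) - b * f u' (real (Suc j)))"
        using lle D0 by (rule mult_right_mono)
      then have rest: "b * C * ((ra - rb) + (\<Sum>i'\<in>{Suc i..<m}. \<alpha> i')) - l * (real (card (S i j)) - b * f u' (real (Suc j)))
               \<le> (\<Sum>x\<in>T - S i j. F x)"
        using IH unfolding e1 e2 by linarith
      have "b * (l * f u' (real (Suc j))) \<ge> b * (l * f u v) + b * (C * rb)"
      proof -
        have "l * f u' (real (Suc j)) \<ge> l * f u v + C * rb"
          using mult_left_mono[OF superf l0] ident by (simp add: distrib_left)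
        then show ?thesis using b by (metis distrib_left mult_left_mono)
      qed
      then show ?thesis
        using split rest unfolding u_def[symmetric] v_def[symmetric] l_def[symmetric]
        by (simp add: algebra_simps)
    qed
  qed
  have mass': "(\<Sum>i<m. \<alpha> i) = (\<Sum>j<n. \<beta> j)" using mass unfolding \<alpha>_def \<beta>_def .
  have sa: "(\<Sum>i<m. \<alpha> i) = \<alpha> 0 + (\<Sum>i'\<in>{Suc 0..<m}. \<alpha> i')"
    using mn(1) by (simp add: lessThan_atLeast0 sum.atLeast_Suc_lessThan)
  have sb: "(\<Sum>j<n. \<beta> j) = \<beta> 0 + (\<Sum>j'\<in>{Suc 0..<n}. \<beta> j')"
    using mn(2) by (simp add: lessThan_atLeast0 sum.atLeast_Suc_lessThan)
  have "b * C * (\<alpha> 0 + (\<Sum>i'\<in>{Suc 0..<m}. \<alpha> i'))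
      - gv 0 * hv 0 * (real (card ({}::'a set)) - b * f (real (Suc 0) - \<alpha> 0/\<alpha> 0) (real (Suc 0) - \<beta> 0/\<beta> 0))
      \<le> (\<Sum>x\<in>T - {}. F x)"
  proof (rule main)
    show "\<alpha> 0 + (\<Sum>i'\<in>{Suc 0..<m}. \<alpha> i') = \<beta> 0 + (\<Sum>j'\<in>{Suc 0..<n}. \<beta> j')"
      using mass' sa sb by simp
    show "b * f (real (Suc 0) - \<alpha> 0/\<alpha> 0) (real (Suc 0) - \<beta> 0/\<beta> 0) \<le> real (card ({}::'a set))"
      using apos[OF mn(1)] bpos[OF mn(2)] unfolding f_def by simp
  qed (use mn apos bpos in \<open>auto intro: less_imp_le\<close>)
  moreover have "\<alpha> 0 + (\<Sum>i'\<in>{Suc 0..<m}. \<alpha> i') = (\<Sum>i<m. gv i powr (1/r))"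
    using sa unfolding \<alpha>_def by simp
  moreover have "f (real (Suc 0) - \<alpha> 0/\<alpha> 0) (real (Suc 0) - \<beta> 0/\<beta> 0) = 0"
    using apos[OF mn(1)] bpos[OF mn(2)] unfolding f_def by simp
  ultimately show ?thesis unfolding C_def T_def by simp
qed

lemma core_diag:
  fixes F :: "'a \<Rightarrow> real" and S :: "nat \<Rightarrow> 'a set" and lam :: "nat \<Rightarrow> real"
    and m :: nat and b :: real
  assumes Fnn: "\<And>x. 0 \<le> F x"
    and Sfin: "\<And>i. finite (S i)"
    and Smono: "\<And>i i'. i \<le> i' \<Longrightarrow> S i \<subseteq> S i'"
    and FS: "\<And>i x. i < m \<Longrightarrow> x \<in> S i \<Longrightarrow> lam i \<le> F x"
    and cardS: "\<And>i. i < m \<Longrightarrow> b * real (Suc i) \<le> real (card (S i))"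
    and ldec: "\<And>i i'. i \<le> i' \<Longrightarrow> i' < m \<Longrightarrow> lam i' \<le> lam i"
    and lnn: "\<And>i. i < m \<Longrightarrow> 0 \<le> lam i"
    and b: "0 \<le> b" and m: "0 < m"
  shows "b * (\<Sum>i<m. lam i) \<le> (\<Sum>x\<in>S (m-1). F x)"
proof -
  define T where "T = S (m-1)"
  have Tfin: "finite T" unfolding T_def by (rule Sfin)
  have ST: "S i \<subseteq> T" if "i < m" for i unfolding T_def by (rule Smono) (use that in auto)
  have sumnn: "0 \<le> (\<Sum>x\<in>A. F x)" for A using Fnn by (simp add: sum_nonneg)
  have main: "b * (\<Sum>i'\<in>{i..<m}. lam i') - lam i * (real (card S0) - b * real i) \<le> (\<Sum>x\<in>T - S0. F x)"
    if "m - i = k" "i < m" "S0 \<subseteq> S i" "b * real i \<le> real (card S0)" for k i S0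
    using that
  proof (induction k arbitrary: i S0)
    case 0 then show ?case by auto
  next
    case (Suc k)
    note hyp = Suc.prems
    have split: "lam i * (real (card (S i)) - real (card S0)) + (\<Sum>x\<in>T - S i. F x) \<le> (\<Sum>x\<in>T - S0. F x)"
      by (rule sum_split_chain) (use Tfin hyp ST FS in auto)
    have c1: "b * real (Suc i) \<le> real (card (S i))" using cardS hyp by auto
    have l0: "0 \<le> lam i" using lnn hyp by auto
    have rest: "b * (\<Sum>i'\<in>{Suc i..<m}. lam i') - lam i * (real (card (S i)) - b * real (Suc i)) \<le> (\<Sum>x\<in>T - S i. F x)"
    proof (cases "Suc i < m")
      case True
      have IH: "b * (\<Sum>i'\<in>{Suc i..<m}. lam i') - lam (Suc i) * (real (card (S i)) - b * real (Suc i)) \<le> (\<Sum>x\<in>T - S i. F x)"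
        by (rule Suc.IH) (use hyp True c1 Smono in auto)
      have "lam (Suc i) * (real (card (S i)) - b * real (Suc i)) \<le> lam i * (real (card (S i)) - b * real (Suc i))"
        using ldec[of i "Suc i"] True c1 by (intro mult_right_mono) auto
      then show ?thesis using IH by linarith
    next
      case False
      then have "{Suc i..<m} = {}" by auto
      moreover have "0 \<le> lam i * (real (card (S i)) - b * real (Suc i))" using l0 c1 by simp
      ultimately show ?thesis using sumnn[of "T - S i"] by simp
    qed
    have e: "(\<Sum>i'\<in>{i..<m}. lam i') = lam i + (\<Sum>i'\<in>{Suc i..<m}. lam i')"
      using hyp by (simp add: sum.atLeast_Suc_lessThan)
    show ?case using split rest unfolding e by (simp add: algebra_simps)
  qed
  have "b * (\<Sum>i'\<in>{0..<m}. lam i') - lam 0 * (real (card ({}::'a set)) - b * real 0) \<le> (\<Sum>x\<in>T - {}. F x)"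
    by (rule main) (use m in auto)
  then show ?thesis unfolding T_def by (simp add: atLeast0LessThan)
qed

lemma adm_nonneg: "admissible g \<Longrightarrow> 0 \<le> g x"
  unfolding admissible_def by auto

lemma adm_summable: "admissible g \<Longrightarrow> g summable_on UNIV"
  unfolding admissible_def by auto

lemma adm_bound:
  fixes g :: "'a \<Rightarrow> real"
  assumes "admissible g" shows "g x \<le> infsum g UNIV"
proof -
  have "sum g {x} \<le> infsum g UNIV"
    by (rule finite_sum_le_infsum) (use assms in \<open>auto simp: admissible_def\<close>)
  then show ?thesis by simp
qed

lemma adm_level_finite:
  fixes g :: "'a \<Rightarrow> real"
  assumes "admissible g" "0 < e" shows "finite {x. e \<le> g x}"
proof -
  have "card G \<le> nat (ceiling (infsum g UNIV / e))" if "G \<subseteq> {x. e \<le> g x}" "finite G" for G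
  proof -
    have "real (card G) * e \<le> sum g G"
      by (rule sum_bounded_below) (use that in auto)
    also have "\<dots> \<le> infsum g UNIV"
      by (rule finite_sum_le_infsum) (use assms that in \<open>auto simp: admissible_def\<close>)
    finally have "real (card G) \<le> infsum g UNIV / e" using assms by (simp add: field_simps)
    then show ?thesis by linarith
  qed
  then show ?thesis using finite_if_finite_subsets_card_bdd by blast
qed

lemma adm_powr_summable:
  fixes g :: "'a \<Rightarrow> real"
  assumes "admissible g" "1 \<le> p" shows "(\<lambda>x. g x powr p) summable_on UNIV"
proof -
  define B where "B = infsum g UNIV"
  have gB: "g x \<le> B" for x unfolding B_def by (rule adm_bound[OF assms(1)])
  have g0: "0 \<le> g x" for x by (rule adm_nonneg[OF assms(1)])
  have le: "g x powr p \<le> B powr (p - 1) * g x" for x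
  proof (cases "g x = 0")
    case True then show ?thesis using assms by simp
  next
    case False
    then have gp: "0 < g x" using g0[of x] by linarith
    have "g x powr p = g x powr (p-1) * g x" using gp by (simp add: powr_diff)
    also have "\<dots> \<le> B powr (p-1) * g x"
    proof (rule mult_right_mono)
      show "g x powr (p-1) \<le> B powr (p-1)"
        using powr_mono2[of "p-1" "g x" B] gp gB[of x] assms(2) by linarith
    qed (use gp in simp)
    finally show ?thesis .
  qed
  have sm: "(\<lambda>x. B powr (p - 1) * g x) summable_on UNIV"
    using adm_summable[OF assms(1)] by (rule summable_on_cmult_right)
  show ?thesis
    by (rule summable_on_comparison_test[OF sm le]) simp
qed

lemma adm_powr_pos:
  fixes g :: "'a \<Rightarrow> real"
  assumes "admissible g" "1 \<le> p" shows "0 < infsum (\<lambda>x. g x powr p) UNIV"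
proof -
  obtain x where "g x \<noteq> 0" using assms(1) unfolding admissible_def by auto
  then have gp: "0 < g x" using adm_nonneg[OF assms(1), of x] by simp
  have "sum (\<lambda>x. g x powr p) {x} \<le> infsum (\<lambda>x. g x powr p) UNIV"
    by (rule finite_sum_le_infsum) (use adm_powr_summable[OF assms] in auto)
  then have "g x powr p \<le> infsum (\<lambda>x. g x powr p) UNIV" by simp
  moreover have "0 < g x powr p" using gp by simp
  ultimately show ?thesis by linarith
qed

lemma sorted_enum:
  fixes g :: "'a \<Rightarrow> real"
  assumes "finite L"
  shows "\<exists>ys. distinct ys \<and> set ys = L \<and> (\<forall>i j. i \<le> j \<longrightarrow> j < length ys \<longrightarrow> g (ys!j) \<le> g (ys!i))"
proof -
  obtain xs where xs: "distinct xs" "set xs = L" using finite_distinct_list[OF assms] by auto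
  define ys where "ys = sort_key (\<lambda>x. - g x) xs"
  have s: "sorted (map (\<lambda>x. - g x) ys)" unfolding ys_def by simp
  have "g (ys!j) \<le> g (ys!i)" if "i \<le> j" "j < length ys" for i j
    using sorted_nth_mono[OF s, of i j] that by simp
  moreover have "distinct ys" "set ys = L" using xs unfolding ys_def by auto
  ultimately show ?thesis by blast
qed

lemma prefix_facts:
  fixes g :: "'a \<Rightarrow> real" and ys :: "'a list"
  assumes d: "distinct ys" and srt: "\<And>i j. i \<le> j \<Longrightarrow> j < length ys \<Longrightarrow> g (ys!j) \<le> g (ys!i)"
  shows "\<And>i. i < length ys \<Longrightarrow> card (set (take (Suc i) ys)) = Suc i"
    and "\<And>i x. i < length ys \<Longrightarrow> x \<in> set (take (Suc i) ys) \<Longrightarrow> g (ys!i) \<le> g x"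
    and "\<And>i i'. i \<le> i' \<Longrightarrow> set (take (Suc i) ys) \<subseteq> set (take (Suc i') ys)"
    and "\<And>i. set (take (Suc i) ys) \<noteq> {} \<or> ys = []"
proof -
  show "card (set (take (Suc i) ys)) = Suc i" if "i < length ys" for i
    using d that by (simp add: distinct_card)
  show "g (ys!i) \<le> g x" if a1: "i < length ys" and a2: "x \<in> set (take (Suc i) ys)" for i x
  proof -
    obtain k where k: "k < length (take (Suc i) ys)" "x = take (Suc i) ys ! k"
      using a2 by (auto simp: in_set_conv_nth)
    then have "k \<le> i" "x = ys ! k" by auto
    then show ?thesis using srt a1 by auto
  qed
  show "set (take (Suc i) ys) \<subseteq> set (take (Suc i') ys)" if "i \<le> i'" for i i'
    using that by (simp add: set_take_subset_set_take)
  show "set (take (Suc i) ys) \<noteq> {} \<or> ys = []" for i by (cases ys) auto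
qed

lemma sum_enum:
  fixes ys :: "'a list" and f :: "'a \<Rightarrow> real"
  assumes "distinct ys"
  shows "(\<Sum>i<length ys. f (ys!i)) = (\<Sum>x\<in>set ys. f x)"
  using sum.reindex_bij_betw[OF bij_betw_nth[OF assms refl refl], of f] by simp

lemma infsum_sum_fin:
  fixes f :: "'b \<Rightarrow> 'a \<Rightarrow> real"
  assumes "finite X" "\<And>x. x \<in> X \<Longrightarrow> f x summable_on A"
  shows "(\<lambda>t. \<Sum>x\<in>X. f x t) summable_on A \<and> infsum (\<lambda>t. \<Sum>x\<in>X. f x t) A = (\<Sum>x\<in>X. infsum (f x) A)"
  using assms
proof (induction X rule: finite_induct)
  case empty then show ?case by simp
next
  case (insert y X)
  then have s1: "f y summable_on A" and IH: "(\<lambda>t. \<Sum>x\<in>X. f x t) summable_on A"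
     "infsum (\<lambda>t. \<Sum>x\<in>X. f x t) A = (\<Sum>x\<in>X. infsum (f x) A)" by auto
  show ?case using insert(1,2) s1 IH
    by (simp add: summable_on_add infsum_add)
qed

lemma mc_bdd:
  fixes f g :: "'a::ab_group_add \<Rightarrow> real"
  assumes "\<And>t. 0 \<le> f t" "\<And>t. f t \<le> Bf" "\<And>t. 0 \<le> g t" "\<And>t. g t \<le> Bg"
  shows "bdd_above (range (\<lambda>t. f t * g (x - t)))"
proof (rule bdd_aboveI2)
  fix t
  have "0 \<le> Bf" using assms(1,2) order_trans by blast
  then show "f t * g (x - t) \<le> Bf * Bg" using assms by (intro mult_mono) auto
qed

lemma mc_upper:
  fixes f g :: "'a::ab_group_add \<Rightarrow> real"
  assumes "\<And>t. 0 \<le> f t" "\<And>t. f t \<le> Bf" "\<And>t. 0 \<le> g t" "\<And>t. g t \<le> Bg"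
  shows "f t * g (x - t) \<le> maxconv f g x"
  unfolding maxconv_def by (rule cSUP_upper[OF _ mc_bdd[OF assms]]) simp

lemma mc_nonneg:
  fixes f g :: "'a::ab_group_add \<Rightarrow> real"
  assumes "\<And>t. 0 \<le> f t" "\<And>t. f t \<le> Bf" "\<And>t. 0 \<le> g t" "\<And>t. g t \<le> Bg"
  shows "0 \<le> maxconv f g x"
proof -
  have "f 0 * g (x - 0) \<le> maxconv f g x" by (rule mc_upper[of f Bf g Bg 0 x, OF assms])
  moreover have "0 \<le> f 0 * g (x - 0)" using assms(1,3) by (rule mult_nonneg_nonneg)
  ultimately show ?thesis by linarith
qed

lemma mc_least:
  fixes f g :: "'a::ab_group_add \<Rightarrow> real"
  assumes "\<And>t. f t * g (x - t) \<le> M"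
  shows "maxconv f g x \<le> M"
  unfolding maxconv_def by (rule cSUP_least) (use assms in auto)

lemma mc_bound:
  fixes f g :: "'a::ab_group_add \<Rightarrow> real"
  assumes "\<And>t. 0 \<le> f t" "\<And>t. f t \<le> Bf" "\<And>t. 0 \<le> g t" "\<And>t. g t \<le> Bg"
  shows "maxconv f g x \<le> Bf * Bg"
proof (rule mc_least)
  fix t
  have "0 \<le> Bf" using assms(1,2) order_trans by blast
  then show "f t * g (x - t) \<le> Bf * Bg" using assms by (intro mult_mono) auto
qed

context
  fixes U :: "'a::ab_group_add set" and g h :: "'a \<Rightarrow> real"
  assumes g: "admissible g" and h: "admissible h"
begin

definition "Bg = infsum g UNIV"
definition "Bh = infsum h UNIV"
definition "F1 = maxconv (indicator U :: 'a \<Rightarrow> real) g"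

lemma g0: "0 \<le> g x" by (rule adm_nonneg[OF g])
lemma h0: "0 \<le> h x" by (rule adm_nonneg[OF h])
lemma gB: "g x \<le> Bg" unfolding Bg_def by (rule adm_bound[OF g])
lemma hB: "h x \<le> Bh" unfolding Bh_def by (rule adm_bound[OF h])
lemma ind0: "0 \<le> (indicator U x :: real)" by simp
lemma ind1: "(indicator U x :: real) \<le> 1" by (simp add: indicator_def)

lemma F1_0: "0 \<le> F1 t" unfolding F1_def by (rule mc_nonneg[OF ind0 ind1 g0 gB])
lemma F1_B: "F1 t \<le> Bg" unfolding F1_def using mc_bound[of "indicator U" 1 g Bg, OF ind0 ind1 g0 gB] by simp

lemma F_0: "0 \<le> maxconv F1 h x" by (rule mc_nonneg[OF F1_0 F1_B h0 hB])

lemma F_lower: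
  assumes "u \<in> U"
  shows "g a * h b \<le> maxconv F1 h (a + b + u)"
proof -
  have "indicator U u * g ((a + u) - u) \<le> F1 (a + u)"
    unfolding F1_def by (rule mc_upper[of "indicator U" 1 g Bg u "a + u", OF ind0 ind1 g0 gB])
  then have "g a \<le> F1 (a + u)" using assms by simp
  then have "g a * h b \<le> F1 (a + u) * h b" using h0 by (rule mult_right_mono)
  also have "\<dots> = F1 (a + u) * h ((a + b + u) - (a + u))" by (simp add: algebra_simps)
  also have "\<dots> \<le> maxconv F1 h (a + b + u)"
    by (rule mc_upper[of F1 Bg h Bh "a + u" "a + b + u", OF F1_0 F1_B h0 hB])
  finally show ?thesis .
qed

definition "g1 t = (\<Sum>u\<in>U. g (t - u))"

lemma g1_summable:
  assumes "finite U" shows "g1 summable_on UNIV"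
proof -
  have tr: "(\<lambda>t. g (t - u)) summable_on UNIV" for u
  proof -
    have inj: "inj (\<lambda>t::'a. t - u)" by (rule injI) simp
    have im: "range (\<lambda>t::'a. t - u) = UNIV" by (rule surjI[where f="\<lambda>y. y + u"]) simp
    have "g summable_on range (\<lambda>t::'a. t - u)" using im adm_summable[OF g] by simp
    then have "(g \<circ> (\<lambda>t. t - u)) summable_on UNIV" using summable_on_reindex[OF inj, of g] by simp
    then show ?thesis by (simp add: comp_def)
  qed
  have e: "g1 = (\<lambda>t. \<Sum>u\<in>U. g (t - u))" by (rule ext) (simp add: g1_def)
  show ?thesis unfolding e using infsum_sum_fin[OF assms, of "\<lambda>u t. g (t - u)" UNIV] tr by blast
qed

lemma F1_g1: assumes fU: "finite U" shows "F1 t \<le> g1 t"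
  unfolding F1_def
proof (rule mc_least)
  fix s
  show "indicator U s * g (t - s) \<le> g1 t"
  proof (cases "s \<in> U")
    case True
    have "g (t - s) \<le> g1 t"
      unfolding g1_def by (rule member_le_sum[of s U "\<lambda>u. g (t - u)"]) (use True g0 fU in auto)
    then show ?thesis using True by simp
  next
    case False
    have "0 \<le> g1 t" unfolding g1_def by (simp add: g0 sum_nonneg)
    then show ?thesis using False by simp
  qed
qed

lemma F_summable:
  assumes "finite U"
  shows "maxconv F1 h summable_on UNIV"
proof (rule nonneg_bdd_above_summable_on)
  show "0 \<le> maxconv F1 h x" for x by (rule F_0)
  have g1s: "g1 summable_on UNIV" by (rule g1_summable[OF assms])
  have g1nn: "0 \<le> g1 t" for t unfolding g1_def by (simp add: g0 sum_nonneg)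
  have ts: "(\<lambda>t. g1 t * h (x - t)) summable_on UNIV" for x
  proof (rule summable_on_comparison_test)
    show "(\<lambda>t. g1 t * Bh) summable_on UNIV" using g1s by (rule summable_on_cmult_left)
    show "g1 t * h (x - t) \<le> g1 t * Bh" for t by (intro mult_left_mono hB g1nn)
    show "0 \<le> g1 t * h (x - t)" for t using g1nn h0 by simp
  qed
  have Fle: "maxconv F1 h x \<le> infsum (\<lambda>t. g1 t * h (x - t)) UNIV" for x
  proof (rule mc_least)
    fix t
    have "F1 t * h (x - t) \<le> g1 t * h (x - t)" using F1_g1[OF assms] h0 by (rule mult_right_mono)
    also have "\<dots> = sum (\<lambda>t. g1 t * h (x - t)) {t}" by simp
    also have "\<dots> \<le> infsum (\<lambda>t. g1 t * h (x - t)) UNIV"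
      by (rule finite_sum_le_infsum[OF ts]) (use g1nn h0 in auto)
    finally show "F1 t * h (x - t) \<le> infsum (\<lambda>t. g1 t * h (x - t)) UNIV" .
  qed
  have "sum (maxconv F1 h) X \<le> Bh * infsum g1 UNIV" if X: "finite X" for X
  proof -
    have "sum (maxconv F1 h) X \<le> (\<Sum>x\<in>X. infsum (\<lambda>t. g1 t * h (x - t)) UNIV)"
      by (rule sum_mono) (rule Fle)
    also have "\<dots> = infsum (\<lambda>t. \<Sum>x\<in>X. g1 t * h (x - t)) UNIV"
      using infsum_sum_fin[OF X, of "\<lambda>x t. g1 t * h (x - t)" UNIV] ts by simp
    also have "\<dots> \<le> infsum (\<lambda>t. Bh * g1 t) UNIV"
    proof (rule infsum_mono)
      show "(\<lambda>t. \<Sum>x\<in>X. g1 t * h (x - t)) summable_on UNIV"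
        using infsum_sum_fin[OF X, of "\<lambda>x t. g1 t * h (x - t)" UNIV] ts by simp
      show "(\<lambda>t. Bh * g1 t) summable_on UNIV" using g1s by (rule summable_on_cmult_right)
      fix t
      have "(\<Sum>x\<in>X. h (x - t)) \<le> Bh"
      proof -
        have inj: "inj_on (\<lambda>x. x - t) X" by (rule inj_onI) simp
        have "(\<Sum>x\<in>X. h (x - t)) = sum h ((\<lambda>x. x - t) ` X)"
          using sum.reindex[OF inj, of h] by simp
        also have "\<dots> \<le> infsum h UNIV"
          by (rule finite_sum_le_infsum) (use X adm_summable[OF h] h0 in auto)
        finally show ?thesis unfolding Bh_def .
      qed
      then have "g1 t * (\<Sum>x\<in>X. h (x - t)) \<le> g1 t * Bh" using g1nn by (rule mult_left_mono)
      then show "(\<Sum>x\<in>X. g1 t * h (x - t)) \<le> Bh * g1 t" by (simp add: sum_distrib_left mult.commute)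
    qed
    also have "\<dots> = Bh * infsum g1 UNIV" by (rule infsum_cmult_right') 
    finally show ?thesis .
  qed
  then show "bdd_above (sum (maxconv F1 h) ` {F. F \<subseteq> UNIV \<and> finite F})"
    by (intro bdd_aboveI2[where M="Bh * infsum g1 UNIV"]) auto
qed

end

lemma approx_level:
  fixes g :: "'a \<Rightarrow> real"
  assumes g: "admissible g" and p: "1 \<le> p" and z: "0 < z" "z < 1"
  shows "\<exists>e>0. z * infsum (\<lambda>x. g x powr p) UNIV \<le> (\<Sum>x\<in>{x. e \<le> g x}. g x powr p)"
proof -
  define P where "P = infsum (\<lambda>x. g x powr p) UNIV"
  have P0: "0 < P" unfolding P_def by (rule adm_powr_pos[OF g p])
  have hs: "((\<lambda>x. g x powr p) has_sum P) UNIV"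
    unfolding P_def using adm_powr_summable[OF g p] by (rule has_sum_infsum)
  obtain X where X: "finite X" "dist (sum (\<lambda>x. g x powr p) X) P \<le> (1 - z) * P"
    using has_sum_finite_approximation[OF hs, of "(1 - z) * P"] P0 z by auto
  have sX: "z * P \<le> sum (\<lambda>x. g x powr p) X"
    using X(2) by (simp add: dist_real_def abs_le_iff algebra_simps)
  define Y where "Y = {x\<in>X. 0 < g x}"
  have Yfin: "finite Y" using X(1) unfolding Y_def by simp
  define e where "e = Min (insert 1 (g ` Y))"
  have e0: "0 < e" unfolding e_def using Yfin by (auto simp: Y_def)
  have eY: "e \<le> g x" if "x \<in> Y" for x unfolding e_def using Yfin that by simp
  have "sum (\<lambda>x. g x powr p) X = sum (\<lambda>x. g x powr p) Y"
  proof (rule sum.mono_neutral_right)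
    show "\<forall>x\<in>X - Y. g x powr p = 0" using adm_nonneg[OF g] by (auto simp: Y_def order_le_less)
  qed (use X(1) in \<open>auto simp: Y_def\<close>)
  also have "\<dots> \<le> (\<Sum>x\<in>{x. e \<le> g x}. g x powr p)"
    by (rule sum_mono2) (use adm_level_finite[OF g e0] eY in auto)
  finally show ?thesis using sX e0 unfolding P_def by force
qed

lemma level_sum_mono:
  fixes g :: "'a \<Rightarrow> real"
  assumes g: "admissible g" and e: "0 < e'" "e' \<le> e"
  shows "(\<Sum>x\<in>{x. e \<le> g x}. g x powr p) \<le> (\<Sum>x\<in>{x. e' \<le> g x}. g x powr p)"
  by (rule sum_mono2) (use adm_level_finite[OF g e(1)] e in auto)

lemma limit_bound:
  fixes g h :: "'a \<Rightarrow> real"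
  assumes g: "admissible g" and h: "admissible h" and p: "1 \<le> p" and q: "1 \<le> q"
    and pq: "1/p + 1/q = 1" and b: "0 \<le> b"
    and H: "\<And>e. 0 < e \<Longrightarrow> b * (\<Sum>x\<in>{x. e \<le> g x}. g x powr p) powr (1/p)
                                * (\<Sum>x\<in>{x. e \<le> h x}. h x powr q) powr (1/q) \<le> N"
  shows "b * lpnorm p g * lpnorm q h \<le> N"
proof (rule field_le_mult_one_interval)
  fix z :: real assume z: "0 < z" "z < 1"
  define P where "P = infsum (\<lambda>x. g x powr p) UNIV"
  define Q where "Q = infsum (\<lambda>x. h x powr q) UNIV"
  have P0: "0 < P" unfolding P_def by (rule adm_powr_pos[OF g p])
  have Q0: "0 < Q" unfolding Q_def by (rule adm_powr_pos[OF h q])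
  obtain e1 where e1: "0 < e1" "z * P \<le> (\<Sum>x\<in>{x. e1 \<le> g x}. g x powr p)"
    using approx_level[OF g p z] unfolding P_def by auto
  obtain e2 where e2: "0 < e2" "z * Q \<le> (\<Sum>x\<in>{x. e2 \<le> h x}. h x powr q)"
    using approx_level[OF h q z] unfolding Q_def by auto
  define e where "e = min e1 e2"
  have e0: "0 < e" using e1 e2 unfolding e_def by simp
  have s1: "z * P \<le> (\<Sum>x\<in>{x. e \<le> g x}. g x powr p)"
    using e1 level_sum_mono[OF g e0, of e1 p] unfolding e_def by simp
  have s2: "z * Q \<le> (\<Sum>x\<in>{x. e \<le> h x}. h x powr q)"
    using e2 level_sum_mono[OF h e0, of e2 q] unfolding e_def by simp
  have m1: "(z * P) powr (1/p) \<le> (\<Sum>x\<in>{x. e \<le> g x}. g x powr p) powr (1/p)"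
    using s1 z P0 p by (intro powr_mono2) auto
  have m2: "(z * Q) powr (1/q) \<le> (\<Sum>x\<in>{x. e \<le> h x}. h x powr q) powr (1/q)"
    using s2 z Q0 q by (intro powr_mono2) auto
  have "z * (b * lpnorm p g * lpnorm q h) = b * ((z * P) powr (1/p) * (z * Q) powr (1/q))"
  proof -
    have "(z * P) powr (1/p) * (z * Q) powr (1/q) = (z powr (1/p) * z powr (1/q)) * (P powr (1/p) * Q powr (1/q))"
      using z P0 Q0 by (simp add: powr_mult)
    also have "z powr (1/p) * z powr (1/q) = z"
      using z pq by (simp add: powr_add[symmetric])
    finally show ?thesis unfolding lpnorm_def P_def Q_def by simp
  qed
  also have "\<dots> \<le> b * ((\<Sum>x\<in>{x. e \<le> g x}. g x powr p) powr (1/p) * (\<Sum>x\<in>{x. e \<le> h x}. h x powr q) powr (1/q))"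
    using m1 m2 b by (intro mult_left_mono mult_mono) auto
  also have "\<dots> \<le> N" using H[OF e0] by (simp add: mult.assoc)
  finally show "z * (b * lpnorm p g * lpnorm q h) \<le> N" .
qed

lemma sumset_finite: "finite A \<Longrightarrow> finite B \<Longrightarrow> finite (sumset A B)"
proof -
  assume "finite A" "finite B"
  moreover have "sumset A B = (\<lambda>(a, b). a + b) ` (A \<times> B)" unfolding sumset_def by auto
  ultimately show ?thesis by simp
qed

lemma sumset_mono: "A \<subseteq> A' \<Longrightarrow> B \<subseteq> B' \<Longrightarrow> sumset A B \<subseteq> sumset A' B'"
  unfolding sumset_def by blast

lemma sumset_mem: "x \<in> sumset (sumset A B) U \<Longrightarrow> \<exists>a b u. a \<in> A \<and> b \<in> B \<and> u \<in> U \<and> x = a + b + u"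
  unfolding sumset_def by blast

lemma beta_p_nonneg: "0 \<le> beta_p p U"
  unfolding beta_p_def
proof (rule cInf_greatest)
  show "{real (card (sumset (sumset A B) U)) / (real (card A) powr (1 / p) * real (card B) powr (1 - 1 / p)) | A B.
      finite A \<and> A \<noteq> {} \<and> finite B \<and> B \<noteq> {}} \<noteq> {}"
    by (rule ccontr) (auto dest: spec[of _ "{0}"])
qed auto

lemma beta_p_lower:
  assumes "finite A" "A \<noteq> {}" "finite B" "B \<noteq> {}"
  shows "beta_p p U * (real (card A) powr (1/p) * real (card B) powr (1 - 1/p)) \<le> real (card (sumset (sumset A B) U))"
proof -
  have "beta_p p U \<le> real (card (sumset (sumset A B) U)) / (real (card A) powr (1/p) * real (card B) powr (1 - 1/p))"
    unfolding beta_p_def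
    by (rule cInf_lower) (use assms in \<open>auto intro!: bdd_belowI[where m=0]\<close>)
  moreover have "0 < real (card A) powr (1/p) * real (card B) powr (1 - 1/p)"
    using assms by (simp add: card_gt_0_iff)
  ultimately show ?thesis by (simp add: pos_le_divide_eq)
qed

lemma beta'_nonneg: "0 \<le> beta' U"
  unfolding beta'_def
proof (rule cInf_greatest)
  show "{real (card (sumset (sumset A B) U)) / sqrt (real (card A) * real (card B)) | A B.
      finite A \<and> A \<noteq> {} \<and> finite B \<and> B \<noteq> {} \<and> card A = card B} \<noteq> {}"
    by (rule ccontr) (auto dest: spec[of _ "{0}"])
qed auto

lemma beta'_lower:
  assumes "finite A" "A \<noteq> {}" "finite B" "B \<noteq> {}" "card A = card B"
  shows "beta' U * real (card A) \<le> real (card (sumset (sumset A B) U))"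
proof -
  have "beta' U \<le> real (card (sumset (sumset A B) U)) / sqrt (real (card A) * real (card B))"
    unfolding beta'_def
    apply (rule cInf_lower)
    using assms apply blast
    by (auto intro!: bdd_belowI[where m=0])
  moreover have "sqrt (real (card A) * real (card B)) = real (card A)" using assms by simp
  moreover have "0 < real (card A)" using assms by (simp add: card_gt_0_iff)
  ultimately show ?thesis by (simp add: pos_le_divide_eq)
qed

lemma beta''_nonneg: "0 \<le> beta'' U"
  unfolding beta''_def
proof (rule cInf_greatest)
  show "{real (card (sumset (sumset A A) U)) / real (card A) | A. finite A \<and> A \<noteq> {}} \<noteq> {}"
    by (rule ccontr) (auto dest: spec[of _ "{0}"])
qed auto

lemma beta''_lower:
  assumes "finite A" "A \<noteq> {}"
  shows "beta'' U * real (card A) \<le> real (card (sumset (sumset A A) U))"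
proof -
  have "beta'' U \<le> real (card (sumset (sumset A A) U)) / real (card A)"
    unfolding beta''_def
    by (rule cInf_lower) (use assms in \<open>auto intro!: bdd_belowI[where m=0]\<close>)
  moreover have "0 < real (card A)" using assms by (simp add: card_gt_0_iff)
  ultimately show ?thesis by (simp add: pos_le_divide_eq)
qed

lemma norm1_ge_sum:
  fixes U :: "'a::ab_group_add set"
  assumes U: "finite U" and g: "admissible g" and h: "admissible h" and T: "finite T"
  shows "(\<Sum>x\<in>T. maxconv (maxconv (indicator U) g) h x) \<le> norm1 (maxconv (maxconv (indicator U) g) h)"
  unfolding norm1_def F1_def[OF g h, symmetric]
  by (rule finite_sum_le_infsum[OF F_summable[OF g h U] T]) (use F_0[OF g h] in auto)

lemma norm1_nonneg:
  fixes U :: "'a::ab_group_add set"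
  assumes g: "admissible g" and h: "admissible h"
  shows "0 \<le> norm1 (maxconv (maxconv (indicator U) g) h)"
  unfolding norm1_def F1_def[OF g h, symmetric]
  by (rule infsum_nonneg) (use F_0[OF g h] in auto)

lemma powr_combine:
  fixes P Q s :: real
  assumes "0 < P" "0 < Q"
  shows "(P / Q) powr (-s) * P = P powr (1 - s) * Q powr s"
proof -
  have "(P / Q) powr (-s) = 1 / ((P / Q) powr s)"
    using assms by (simp add: powr_minus_divide)
  also have "\<dots> = Q powr s / P powr s" using assms by (simp add: powr_divide)
  finally have "(P / Q) powr (-s) = Q powr s / P powr s" .
  moreover have "P powr (1 - s) = P / P powr s" using assms by (simp add: powr_diff)
  ultimately show ?thesis by simp
qed

lemma bp_finite:
  fixes U :: "'a::ab_group_add set" and g h :: "'a \<Rightarrow> real"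
  assumes U: "finite U" and p: "1 < p" and g: "admissible g" and h: "admissible h" and e: "0 < e"
  shows "beta_p p U * (\<Sum>x\<in>{x. e \<le> g x}. g x powr p) powr (1/p)
          * (\<Sum>x\<in>{x. e \<le> h x}. h x powr (p/(p-1))) powr (1/(p/(p-1)))
         \<le> norm1 (maxconv (maxconv (indicator U) g) h)"
proof -
  define q where "q = p/(p-1)"
  define r where "r = 1/p"
  define b where "b = beta_p p U"
  define Fm where "Fm = maxconv (maxconv (indicator U) g) h"
  define N where "N = norm1 Fm"
  have r: "0 < r" "r < 1" using p unfolding r_def by auto
  have q1: "1/q = 1 - r" using p unfolding q_def r_def by (simp add: field_simps)
  have q2: "1/(1-r) = q" using p unfolding q_def r_def by (simp add: field_simps)
  have rp: "1/r = p" unfolding r_def by simp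
  have b0: "0 \<le> b" unfolding b_def by (rule beta_p_nonneg)
  have N0: "0 \<le> N" unfolding N_def Fm_def by (rule norm1_nonneg[OF g h])
  define Lg where "Lg = {x. e \<le> g x}"
  define Lh where "Lh = {x. e \<le> h x}"
  have Lgf: "finite Lg" unfolding Lg_def by (rule adm_level_finite[OF g e])
  have Lhf: "finite Lh" unfolding Lh_def by (rule adm_level_finite[OF h e])
  show ?thesis
  proof (cases "Lg = {} \<or> Lh = {}")
    case True
    then show ?thesis using N0 unfolding N_def Fm_def Lg_def Lh_def by auto
  next
    case False
    obtain ys where ys: "distinct ys" "set ys = Lg" "\<And>i j. i \<le> j \<Longrightarrow> j < length ys \<Longrightarrow> g (ys!j) \<le> g (ys!i)"
      using sorted_enum[OF Lgf, of g] by auto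
    obtain zs where zs: "distinct zs" "set zs = Lh" "\<And>i j. i \<le> j \<Longrightarrow> j < length zs \<Longrightarrow> h (zs!j) \<le> h (zs!i)"
      using sorted_enum[OF Lhf, of h] by auto
    define m where "m = length ys"
    define n where "n = length zs"
    have m0: "0 < m" using False ys(2) unfolding m_def by (cases ys) auto
    have n0: "0 < n" using False zs(2) unfolding n_def by (cases zs) auto
    define gv where "gv i = g (ys!i)" for i
    define hv where "hv j = h (zs!j)" for j
    define SA where "SA i = set (take (Suc i) ys)" for i
    define SB where "SB j = set (take (Suc j) zs)" for j
    define S where "S i j = sumset (sumset (SA i) (SB j)) U" for i j
    note pg = prefix_facts[where g=g, OF ys(1) ys(3)]
    note ph = prefix_facts[where g=h, OF zs(1) zs(3)]
    have gpos: "0 < gv i" if "i < m" for i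
    proof -
      have "ys ! i \<in> Lg" using ys(2) that unfolding m_def by (metis nth_mem)
      then show ?thesis unfolding gv_def Lg_def using e by auto
    qed
    have hpos: "0 < hv j" if "j < n" for j
    proof -
      have "zs ! j \<in> Lh" using zs(2) that unfolding n_def by (metis nth_mem)
      then show ?thesis unfolding hv_def Lh_def using e by auto
    qed
    define P where "P = (\<Sum>i<m. gv i powr p)"
    define Q where "Q = (\<Sum>j<n. hv j powr q)"
    have gp': "0 < gv i powr p" if "i < m" for i using gpos[OF that] by simp
    have hp': "0 < hv j powr q" if "j < n" for j using hpos[OF that] by simp
    have P0: "0 < P" unfolding P_def using gp' m0 by (intro sum_pos) auto
    have Q0: "0 < Q" unfolding Q_def using hp' n0 by (intro sum_pos) auto
    have PL: "P = (\<Sum>x\<in>Lg. g x powr p)"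
      unfolding P_def gv_def m_def using sum_enum[OF ys(1), of "\<lambda>x. g x powr p"] ys(2) by simp
    have QL: "Q = (\<Sum>x\<in>Lh. h x powr q)"
      unfolding Q_def hv_def n_def using sum_enum[OF zs(1), of "\<lambda>x. h x powr q"] zs(2) by simp
    define c where "c = P / Q"
    have c0: "0 < c" unfolding c_def using P0 Q0 by simp
    have core: "b * c powr (-(1-r)) * (\<Sum>i<m. gv i powr (1/r)) \<le> (\<Sum>x\<in>S (m-1) (n-1). Fm x)"
    proof (rule core_p[OF r])
      show "0 \<le> Fm x" for x unfolding Fm_def F1_def[OF g h, symmetric] by (rule F_0[OF g h])
      show "finite (S i j)" for i j unfolding S_def SA_def SB_def
        by (intro sumset_finite U) auto
      show "S i j \<subseteq> S i' j'" if "i \<le> i'" "j \<le> j'" for i j i' j'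
        unfolding S_def SA_def SB_def using that pg(3) ph(3) by (intro sumset_mono) auto
      show "gv i * hv j \<le> Fm x" if that: "i < m" "j < n" and xS: "x \<in> S i j" for i j x
      proof -
        obtain a b' u where abu: "a \<in> SA i" "b' \<in> SB j" "u \<in> U" "x = a + b' + u"
          using sumset_mem[of x "SA i" "SB j" U] xS unfolding S_def by blast
        have "gv i \<le> g a" unfolding gv_def using pg(2) that abu unfolding SA_def m_def by blast
        moreover have "hv j \<le> h b'" unfolding hv_def using ph(2) that abu unfolding SB_def n_def by blast
        ultimately have "gv i * hv j \<le> g a * h b'"
          using gpos[OF that(1)] hpos[OF that(2)] by (intro mult_mono) auto
        also have "\<dots> \<le> Fm x" unfolding Fm_def F1_def[OF g h, symmetric] abu(4)
          by (rule F_lower[OF g h abu(3)])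
        finally show ?thesis .
      qed
      show "b * (real (Suc i) powr r * real (Suc j) powr (1-r)) \<le> real (card (S i j))"
        if "i < m" "j < n" for i j
      proof -
        have cA: "card (SA i) = Suc i" using pg(1) that unfolding SA_def m_def by blast
        have cB: "card (SB j) = Suc j" using ph(1) that unfolding SB_def n_def by blast
        have ne: "SA i \<noteq> {}" "SB j \<noteq> {}" using cA cB by auto
        show ?thesis using beta_p_lower[of "SA i" "SB j" p U] ne cA cB
          unfolding S_def b_def r_def SA_def SB_def by simp
      qed
      show "0 < gv i" if "i < m" for i using gpos that .
      show "gv i' \<le> gv i" if "i \<le> i'" "i' < m" for i i' unfolding gv_def using ys(3) that m_def by blast
      show "0 < hv j" if "j < n" for j using hpos that .
      show "hv j' \<le> hv j" if "j \<le> j'" "j' < n" for j j' unfolding hv_def using zs(3) that n_def by blast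
      show "0 \<le> b" by (rule b0)
      show "0 < c" by (rule c0)
      show "(\<Sum>i<m. gv i powr (1/r)) = (\<Sum>j<n. c * hv j powr (1/(1-r)))"
        unfolding rp q2 sum_distrib_left[symmetric] Q_def[symmetric] P_def[symmetric] c_def
        using Q0 by simp
      show "0 < m" "0 < n" by (rule m0, rule n0)
    qed
    have T: "(\<Sum>x\<in>S (m-1) (n-1). Fm x) \<le> N"
      unfolding N_def Fm_def
      by (rule norm1_ge_sum[OF U g h]) (simp add: S_def SA_def SB_def sumset_finite U)
    have "b * c powr (-(1-r)) * (\<Sum>i<m. gv i powr (1/r)) = b * (P powr r * Q powr (1 - r))"
      unfolding rp P_def[symmetric] c_def using powr_combine[OF P0 Q0, of "1 - r"] by (simp add: mult.assoc)
    then have "b * (P powr r * Q powr (1 - r)) \<le> N" using core T by linarith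
    then show ?thesis unfolding PL QL r_def q1[symmetric] q_def[symmetric] Lg_def Lh_def b_def N_def Fm_def
      using p by (simp add: mult.assoc q_def diff_divide_distrib)
  qed
qed

lemma ident_sym: "ident_distrib g h \<Longrightarrow> ident_distrib h g"
  unfolding ident_distrib_def by auto

lemma sorted_val_le:
  fixes g h :: "'a \<Rightarrow> real"
  assumes id: "ident_distrib g h" and e: "0 < e"
    and ys: "distinct ys" "set ys = {x. e \<le> g x}" "\<And>i j. i \<le> j \<Longrightarrow> j < length ys \<Longrightarrow> g (ys!j) \<le> g (ys!i)"
    and zs: "distinct zs" "set zs = {x. e \<le> h x}" "\<And>i j. i \<le> j \<Longrightarrow> j < length zs \<Longrightarrow> h (zs!j) \<le> h (zs!i)"
    and i: "i < length ys" "i < length zs"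
  shows "h (zs!i) \<le> g (ys!i)"
proof (rule ccontr)
  assume "\<not> h (zs!i) \<le> g (ys!i)"
  then have lt: "g (ys!i) < h (zs!i)" by simp
  define t where "t = h (zs!i)"
  have te: "e \<le> t" unfolding t_def using zs(2) i(2) by (metis mem_Collect_eq nth_mem)
  then have t0: "0 < t" using e by simp
  have sub1: "set (take (Suc i) zs) \<subseteq> {x. t \<le> h x}"
    using prefix_facts(2)[where g=h, OF zs(1) zs(3) i(2)] unfolding t_def by auto
  have sub2: "{x. t \<le> g x} \<subseteq> set (take i ys)"
  proof
    fix x assume x: "x \<in> {x. t \<le> g x}"
    then have "x \<in> set ys" using ys(2) te by auto
    then obtain k where k: "k < length ys" "x = ys!k" by (auto simp: in_set_conv_nth)
    have "k < i"
    proof (rule ccontr)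
      assume "\<not> k < i"
      then have "g (ys!k) \<le> g (ys!i)" using ys(3) k by auto
      then show False using x k lt unfolding t_def by auto
    qed
    then show "x \<in> set (take i ys)" using k by (auto simp: in_set_conv_nth)
  qed
  have fin: "finite {x. t \<le> h x}" using zs(2) te by (metis (mono_tags, lifting) finite_set finite_subset mem_Collect_eq order_trans subsetI)
  have "Suc i \<le> card {x. t \<le> h x}"
    using card_mono[OF fin sub1] distinct_card[of "take (Suc i) zs"] zs(1) i(2) by simp
  also have "\<dots> = card {x. t \<le> g x}" using id t0 unfolding ident_distrib_def by simp
  also have "\<dots> \<le> card (set (take i ys))" by (rule card_mono[OF _ sub2]) simp
  also have "\<dots> \<le> i" by (metis card_length length_take min.bounded_iff)
  finally show False by simp
qed

lemma bd_core:
  fixes U :: "'a::ab_group_add set" and g h :: "'a \<Rightarrow> real"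
  assumes U: "finite U" and g: "admissible g" and h: "admissible h"
    and ys: "distinct ys" "\<And>i j. i \<le> j \<Longrightarrow> j < length ys \<Longrightarrow> g (ys!j) \<le> g (ys!i)"
    and zs: "distinct zs" "\<And>i j. i \<le> j \<Longrightarrow> j < length zs \<Longrightarrow> h (zs!j) \<le> h (zs!i)"
    and len: "length zs = length ys" and m0: "0 < length ys"
    and eq: "\<And>i. i < length ys \<Longrightarrow> h (zs!i) = g (ys!i)"
    and pos: "\<And>i. i < length ys \<Longrightarrow> 0 < g (ys!i)"
    and b: "0 \<le> b"
    and cardb: "\<And>i. i < length ys \<Longrightarrow> b * real (Suc i) \<le>
        real (card (sumset (sumset (set (take (Suc i) ys)) (set (take (Suc i) zs))) U))"
  shows "b * (\<Sum>i<length ys. g (ys!i) * g (ys!i)) \<le> norm1 (maxconv (maxconv (indicator U) g) h)"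
proof -
  define m where "m = length ys"
  define Fm where "Fm = maxconv (maxconv (indicator U) g) h"
  define S where "S i = sumset (sumset (set (take (Suc i) ys)) (set (take (Suc i) zs))) U" for i
  note pg = prefix_facts[where g=g, OF ys(1) ys(2)]
  note ph = prefix_facts[where g=h, OF zs(1) zs(2)]
  have "b * (\<Sum>i<m. g (ys!i) * g (ys!i)) \<le> (\<Sum>x\<in>S (m-1). Fm x)"
  proof (rule core_diag)
    show "0 \<le> Fm x" for x unfolding Fm_def F1_def[OF g h, symmetric] by (rule F_0[OF g h])
    show "finite (S i)" for i unfolding S_def by (intro sumset_finite U) auto
    show "S i \<subseteq> S i'" if "i \<le> i'" for i i'
      unfolding S_def using that pg(3) ph(3) by (intro sumset_mono) auto
    show "g (ys!i) * g (ys!i) \<le> Fm x" if that: "i < m" and xS: "x \<in> S i" for i x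
    proof -
      obtain a b' u where abu: "a \<in> set (take (Suc i) ys)" "b' \<in> set (take (Suc i) zs)" "u \<in> U" "x = a + b' + u"
        using sumset_mem[of x _ _ U] xS unfolding S_def by blast
      have "g (ys!i) \<le> g a" using pg(2) that abu unfolding m_def by blast
      moreover have "h (zs!i) \<le> h b'" using ph(2) that abu len unfolding m_def by auto
      ultimately have "g (ys!i) * g (ys!i) \<le> g a * h b'"
        using pos[of i] eq[of i] that unfolding m_def by (intro mult_mono) auto
      also have "\<dots> \<le> Fm x" unfolding Fm_def F1_def[OF g h, symmetric] abu(4)
        by (rule F_lower[OF g h abu(3)])
      finally show ?thesis .
    qed
    show "b * real (Suc i) \<le> real (card (S i))" if "i < m" for i
      using cardb that unfolding S_def m_def by blast
    show "g (ys!i') * g (ys!i') \<le> g (ys!i) * g (ys!i)" if "i \<le> i'" "i' < m" for i i'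
      using ys(2)[OF that[unfolded m_def]] pos[of i'] that unfolding m_def by (intro mult_mono) auto
    show "0 \<le> g (ys!i) * g (ys!i)" if "i < m" for i by simp
    show "0 \<le> b" by (rule b)
    show "0 < m" using m0 unfolding m_def .
  qed
  also have "\<dots> \<le> norm1 Fm" unfolding Fm_def
    by (rule norm1_ge_sum[OF U g h]) (simp add: S_def sumset_finite U)
  finally show ?thesis unfolding m_def Fm_def .
qed

lemma powr2_sq: fixes x :: real assumes "0 < x" shows "x powr 2 = x * x"
  using powr_realpow[OF assms, of 2] by (simp add: power2_eq_square)

lemma sq_powr_sum:
  fixes S :: real assumes "0 \<le> S" shows "S powr (1/2) * S powr (1/2) = S"
  using assms by (simp add: powr_add[symmetric])

lemma b1_finite:
  fixes U :: "'a::ab_group_add set" and g h :: "'a \<Rightarrow> real"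
  assumes U: "finite U" and g: "admissible g" and h: "admissible h" and id: "ident_distrib g h"
    and e: "0 < e"
  shows "beta' U * (\<Sum>x\<in>{x. e \<le> g x}. g x powr 2) powr (1/2) * (\<Sum>x\<in>{x. e \<le> h x}. h x powr 2) powr (1/2)
         \<le> norm1 (maxconv (maxconv (indicator U) g) h)"
proof -
  define Lg where "Lg = {x. e \<le> g x}"
  define Lh where "Lh = {x. e \<le> h x}"
  have Lgf: "finite Lg" unfolding Lg_def by (rule adm_level_finite[OF g e])
  have Lhf: "finite Lh" unfolding Lh_def by (rule adm_level_finite[OF h e])
  have N0: "0 \<le> norm1 (maxconv (maxconv (indicator U) g) h)" by (rule norm1_nonneg[OF g h])
  show ?thesis
  proof (cases "Lg = {} \<or> Lh = {}")
    case True
    then show ?thesis using N0 unfolding Lg_def Lh_def by auto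
  next
    case False
    obtain ys where ys: "distinct ys" "set ys = Lg" "\<And>i j. i \<le> j \<Longrightarrow> j < length ys \<Longrightarrow> g (ys!j) \<le> g (ys!i)"
      using sorted_enum[OF Lgf, of g] by auto
    obtain zs where zs: "distinct zs" "set zs = Lh" "\<And>i j. i \<le> j \<Longrightarrow> j < length zs \<Longrightarrow> h (zs!j) \<le> h (zs!i)"
      using sorted_enum[OF Lhf, of h] by auto
    have "card Lg = card Lh" using id e unfolding ident_distrib_def Lg_def Lh_def by simp
    then have len: "length zs = length ys" using ys zs distinct_card by metis
    have m0: "0 < length ys" using False ys(2) by (cases ys) auto
    have eq: "h (zs!i) = g (ys!i)" if "i < length ys" for i
    proof (rule antisym)
      show "h (zs!i) \<le> g (ys!i)"
        by (rule sorted_val_le[OF id e ys(1) _ ys(3) zs(1) _ zs(3)]) (use ys zs that len Lg_def Lh_def in auto)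
      show "g (ys!i) \<le> h (zs!i)"
        by (rule sorted_val_le[OF ident_sym[OF id] e zs(1) _ zs(3) ys(1) _ ys(3)]) (use ys zs that len Lg_def Lh_def in auto)
    qed
    have pos: "0 < g (ys!i)" if "i < length ys" for i
    proof -
      have "ys!i \<in> Lg" using ys(2) that by (metis nth_mem)
      then show ?thesis using e unfolding Lg_def by auto
    qed
    have core: "beta' U * (\<Sum>i<length ys. g (ys!i) * g (ys!i)) \<le> norm1 (maxconv (maxconv (indicator U) g) h)"
    proof (rule bd_core[OF U g h ys(1) ys(3) zs(1) zs(3) len m0 eq pos beta'_nonneg])
      fix i assume i: "i < length ys"
      have c1: "card (set (take (Suc i) ys)) = Suc i" using prefix_facts(1)[where g=g, OF ys(1) ys(3) i] .
      have c2: "card (set (take (Suc i) zs)) = Suc i" using prefix_facts(1)[where g=h, OF zs(1) zs(3)] i len by simp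
      show "beta' U * real (Suc i) \<le> real (card (sumset (sumset (set (take (Suc i) ys)) (set (take (Suc i) zs))) U))"
        using beta'_lower[of "set (take (Suc i) ys)" "set (take (Suc i) zs)" U] c1 c2
        by (metis List.finite_set Zero_not_Suc card.empty)
    qed
    define S where "S = (\<Sum>i<length ys. g (ys!i) * g (ys!i))"
    have S0: "0 \<le> S" unfolding S_def by (simp add: sum_nonneg)
    have SL: "(\<Sum>x\<in>Lg. g x powr 2) = S"
    proof -
      have "(\<Sum>x\<in>Lg. g x powr 2) = (\<Sum>i<length ys. g (ys!i) powr 2)"
        using sum_enum[OF ys(1), of "\<lambda>x. g x powr 2"] ys(2) by simp
      also have "\<dots> = S" unfolding S_def using pos by (intro sum.cong) (auto simp: powr2_sq)
      finally show ?thesis .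
    qed
    have SH: "(\<Sum>x\<in>Lh. h x powr 2) = S"
    proof -
      have "(\<Sum>x\<in>Lh. h x powr 2) = (\<Sum>i<length zs. h (zs!i) powr 2)"
        using sum_enum[OF zs(1), of "\<lambda>x. h x powr 2"] zs(2) by simp
      also have "\<dots> = S" unfolding S_def using pos eq len by (intro sum.cong) (auto simp: powr2_sq)
      finally show ?thesis .
    qed
    show ?thesis using core unfolding Lg_def[symmetric] Lh_def[symmetric] SL SH S_def[symmetric]
      using sq_powr_sum[OF S0] by (simp add: mult.assoc)
  qed
qed

lemma b2_finite:
  fixes U :: "'a::ab_group_add set" and g :: "'a \<Rightarrow> real"
  assumes U: "finite U" and g: "admissible g" and e: "0 < e"
  shows "beta'' U * (\<Sum>x\<in>{x. e \<le> g x}. g x powr 2) powr (1/2) * (\<Sum>x\<in>{x. e \<le> g x}. g x powr 2) powr (1/2)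
         \<le> norm1 (maxconv (maxconv (indicator U) g) g)"
proof -
  define Lg where "Lg = {x. e \<le> g x}"
  have Lgf: "finite Lg" unfolding Lg_def by (rule adm_level_finite[OF g e])
  have N0: "0 \<le> norm1 (maxconv (maxconv (indicator U) g) g)" by (rule norm1_nonneg[OF g g])
  show ?thesis
  proof (cases "Lg = {}")
    case True
    then show ?thesis using N0 unfolding Lg_def by auto
  next
    case False
    obtain ys where ys: "distinct ys" "set ys = Lg" "\<And>i j. i \<le> j \<Longrightarrow> j < length ys \<Longrightarrow> g (ys!j) \<le> g (ys!i)"
      using sorted_enum[OF Lgf, of g] by auto
    have m0: "0 < length ys" using False ys(2) by (cases ys) auto
    have pos: "0 < g (ys!i)" if "i < length ys" for i
    proof -
      have "ys!i \<in> Lg" using ys(2) that by (metis nth_mem)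
      then show ?thesis using e unfolding Lg_def by auto
    qed
    have core: "beta'' U * (\<Sum>i<length ys. g (ys!i) * g (ys!i)) \<le> norm1 (maxconv (maxconv (indicator U) g) g)"
    proof (rule bd_core[OF U g g ys(1) ys(3) ys(1) ys(3) refl m0 refl pos beta''_nonneg])
      fix i assume i: "i < length ys"
      have c1: "card (set (take (Suc i) ys)) = Suc i" using prefix_facts(1)[where g=g, OF ys(1) ys(3) i] .
      show "beta'' U * real (Suc i) \<le> real (card (sumset (sumset (set (take (Suc i) ys)) (set (take (Suc i) ys))) U))"
        using beta''_lower[of "set (take (Suc i) ys)" U] c1
        by (metis List.finite_set Zero_not_Suc card.empty)
    qed
    define S where "S = (\<Sum>i<length ys. g (ys!i) * g (ys!i))"
    have S0: "0 \<le> S" unfolding S_def by (simp add: sum_nonneg)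
    have SL: "(\<Sum>x\<in>Lg. g x powr 2) = S"
    proof -
      have "(\<Sum>x\<in>Lg. g x powr 2) = (\<Sum>i<length ys. g (ys!i) powr 2)"
        using sum_enum[OF ys(1), of "\<lambda>x. g x powr 2"] ys(2) by simp
      also have "\<dots> = S" unfolding S_def using pos by (intro sum.cong) (auto simp: powr2_sq)
      finally show ?thesis .
    qed
    show ?thesis using core unfolding Lg_def[symmetric] SL S_def[symmetric]
      using sq_powr_sum[OF S0] by (simp add: mult.assoc)
  qed
qed

lemma ind_adm:
  assumes "finite A" "A \<noteq> {}" shows "admissible (indicator A :: 'a \<Rightarrow> real)"
  unfolding admissible_def
proof (intro conjI)
  show "\<forall>x. 0 \<le> (indicator A x :: real)" by simp
  show "(indicator A :: 'a \<Rightarrow> real) summable_on UNIV"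
  proof (rule finite_nonzero_values_imp_summable_on)
    have "{x \<in> UNIV. (indicator A x :: real) \<noteq> 0} = A" by (auto simp: indicator_def)
    then show "finite {x \<in> UNIV. (indicator A x :: real) \<noteq> 0}" using assms(1) by simp
  qed
  obtain a where "a \<in> A" using assms(2) by auto
  then show "(indicator A :: 'a \<Rightarrow> real) \<noteq> (\<lambda>_. 0)" by (metis indicator_simps(1) one_neq_zero)
qed

lemma infsum_ind:
  assumes "finite A" shows "infsum (indicator A :: 'a \<Rightarrow> real) UNIV = real (card A)"
proof -
  have "infsum (indicator A :: 'a \<Rightarrow> real) UNIV = infsum (indicator A :: 'a \<Rightarrow> real) A"
    by (rule infsum_cong_neutral) auto
  also have "\<dots> = real (card A)" using assms by simp
  finally show ?thesis .
qed

lemma ind_lpnorm: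
  assumes "finite A" "0 < p" shows "lpnorm p (indicator A :: 'a \<Rightarrow> real) = real (card A) powr (1/p)"
proof -
  have "(\<lambda>x. (indicator A x :: real) powr p) = indicator A"
    using assms by (auto simp: indicator_def)
  then show ?thesis unfolding lpnorm_def using infsum_ind[OF assms(1)] by simp
qed

lemma ind_norm1:
  assumes "finite A" shows "norm1 (indicator A :: 'a \<Rightarrow> real) = real (card A)"
  unfolding norm1_def by (rule infsum_ind[OF assms])

lemma ind_maxconv:
  fixes A B :: "'a::ab_group_add set"
  shows "maxconv (indicator A :: 'a \<Rightarrow> real) (indicator B) = indicator (sumset A B)"
proof
  fix x
  have bdd: "bdd_above (range (\<lambda>t. (indicator A t :: real) * indicator B (x - t)))"
    by (rule bdd_aboveI2[where M=1]) (simp add: indicator_def)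
  show "maxconv (indicator A :: 'a \<Rightarrow> real) (indicator B) x = indicator (sumset A B) x"
  proof (cases "x \<in> sumset A B")
    case True
    then obtain a b where ab: "a \<in> A" "b \<in> B" "x = a + b" unfolding sumset_def by blast
    have "maxconv (indicator A :: 'a \<Rightarrow> real) (indicator B) x = 1"
    proof (rule antisym)
      show "maxconv (indicator A :: 'a \<Rightarrow> real) (indicator B) x \<le> 1"
        by (rule mc_least) (simp add: indicator_def)
      have "(indicator A a :: real) * indicator B (x - a) \<le> maxconv (indicator A) (indicator B) x"
        unfolding maxconv_def by (rule cSUP_upper[OF _ bdd]) simp
      then show "1 \<le> maxconv (indicator A :: 'a \<Rightarrow> real) (indicator B) x" using ab by simp
    qed
    then show ?thesis using True by simp
  next
    case False
    have z0: "(indicator A t :: real) * indicator B (x - t) = 0" for t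
    proof (cases "t \<in> A \<and> x - t \<in> B")
      case True
      moreover have "x = t + (x - t)" by simp
      ultimately have "x \<in> sumset A B" unfolding sumset_def by blast
      then show ?thesis using False by simp
    qed auto
    have z: "(\<lambda>t. (indicator A t :: real) * indicator B (x - t)) = (\<lambda>t::'a. 0::real)"
      by (rule ext) (rule z0)
    have "maxconv (indicator A :: 'a \<Rightarrow> real) (indicator B) x = (SUP t::'a. (0::real))" unfolding maxconv_def z ..
    also have "\<dots> = 0" by (rule cSUP_const) simp
    finally have "maxconv (indicator A :: 'a \<Rightarrow> real) (indicator B) x = 0" .
    then show ?thesis using False by simp
  qed
qed

lemma sumset_comm3:
  fixes U A B :: "'a::ab_group_add set"
  shows "sumset (sumset U A) B = sumset (sumset A B) U"
proof (intro subset_antisym subsetI)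
  fix x assume "x \<in> sumset (sumset U A) B"
  then obtain u a b where "u \<in> U" "a \<in> A" "b \<in> B" "x = u + a + b" using sumset_mem by blast
  moreover have "u + a + b = (a + b) + u" by (simp add: ac_simps)
  ultimately show "x \<in> sumset (sumset A B) U" unfolding sumset_def by blast
next
  fix x assume "x \<in> sumset (sumset A B) U"
  then obtain u a b where "a \<in> A" "b \<in> B" "u \<in> U" "x = a + b + u" using sumset_mem by blast
  moreover have "a + b + u = (u + a) + b" by (simp add: ac_simps)
  ultimately show "x \<in> sumset (sumset U A) B" unfolding sumset_def by blast
qed

lemma ind_F:
  fixes U A B :: "'a::ab_group_add set"
  assumes "finite U" "finite A" "finite B"
  shows "norm1 (maxconv (maxconv (indicator U :: 'a \<Rightarrow> real) (indicator A)) (indicator B)) = real (card (sumset (sumset A B) U))"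
  unfolding ind_maxconv
  by (subst sumset_comm3[of U A B, symmetric], rule ind_norm1) (intro sumset_finite assms)

lemma inf_eq:
  fixes X Y :: "real set"
  assumes "X \<subseteq> Y" "X \<noteq> {}" "bdd_below Y" "\<And>y. y \<in> Y \<Longrightarrow> Inf X \<le> y"
  shows "Inf X = Inf Y"
proof (rule antisym)
  show "Inf X \<le> Inf Y" using assms by (intro cInf_greatest) auto
  show "Inf Y \<le> Inf X" using assms by (intro cInf_superset_mono) auto
qed

lemma lpnorm_pos: "admissible g \<Longrightarrow> 1 \<le> p \<Longrightarrow> 0 < lpnorm p g"
  unfolding lpnorm_def using adm_powr_pos[of g p] by simp

lemma lpnorm_nonneg: "0 \<le> lpnorm p g"
  unfolding lpnorm_def by simp

theorem mainTheorem9: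
  fixes U :: "'a::ab_group_add set" and p :: real
  assumes "finite U" and "1 < p"
  shows "beta_p p U = gamma_p p (indicator U :: 'a \<Rightarrow> real)
       \<and> beta' U = gamma' (indicator U :: 'a \<Rightarrow> real)
       \<and> beta'' U = gamma'' (indicator U :: 'a \<Rightarrow> real)"
proof -
  note U = assms(1) and p = assms(2)
  define q where "q = p / (p - 1)"
  have q1: "1 \<le> q" using p unfolding q_def by (simp add: field_simps)
  have pq: "1/p + 1/q = 1" using p unfolding q_def by (simp add: field_simps)
  have iq: "1/q = 1 - 1/p" using p unfolding q_def by (simp add: field_simps)
  have nonempty: "{0::'a} \<noteq> {}" "finite {0::'a}" by auto
  let ?F = "\<lambda>g h. norm1 (maxconv (maxconv (indicator U :: 'a \<Rightarrow> real) g) h)"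
  have P1: "beta_p p U = gamma_p p (indicator U :: 'a \<Rightarrow> real)"
    unfolding gamma_p_def Let_def q_def[symmetric]
  proof (subst beta_p_def, rule inf_eq)
    show "{real (card (sumset (sumset A B) U)) / (real (card A) powr (1 / p) * real (card B) powr (1 - 1 / p)) | A B.
      finite A \<and> A \<noteq> {} \<and> finite B \<and> B \<noteq> {}} \<noteq> {}"
      using nonempty by blast
    show "{real (card (sumset (sumset A B) U)) / (real (card A) powr (1 / p) * real (card B) powr (1 - 1 / p)) | A B.
      finite A \<and> A \<noteq> {} \<and> finite B \<and> B \<noteq> {}} \<subseteq>
      {?F g h / (lpnorm p g * lpnorm q h) | g h. admissible g \<and> admissible h}"
    proof (rule subsetI)
      fix y assume "y \<in> {real (card (sumset (sumset A B) U)) / (real (card A) powr (1 / p) * real (card B) powr (1 - 1 / p)) | A B.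
        finite A \<and> A \<noteq> {} \<and> finite B \<and> B \<noteq> {}}"
      then obtain A B where AB: "finite A" "A \<noteq> {}" "finite B" "B \<noteq> {}"
        and y: "y = real (card (sumset (sumset A B) U)) / (real (card A) powr (1 / p) * real (card B) powr (1 - 1 / p))"
        by blast
      have "y = ?F (indicator A) (indicator B) / (lpnorm p (indicator A) * lpnorm q (indicator B))"
        unfolding y ind_F[OF U AB(1,3)] ind_lpnorm[OF AB(1), of p, OF p[THEN order.strict_trans[OF zero_less_one]]]
          ind_lpnorm[OF AB(3), of q, OF order.strict_trans2[OF zero_less_one q1]] iq ..
      then show "y \<in> {?F g h / (lpnorm p g * lpnorm q h) | g h. admissible g \<and> admissible h}"
        using ind_adm[OF AB(1,2)] ind_adm[OF AB(3,4)] by blast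
    qed
    show "bdd_below {?F g h / (lpnorm p g * lpnorm q h) | g h. admissible g \<and> admissible h}"
      by (rule bdd_belowI[where m=0])
         (auto intro!: divide_nonneg_nonneg norm1_nonneg simp: lpnorm_nonneg)
    fix y assume "y \<in> {?F g h / (lpnorm p g * lpnorm q h) | g h. admissible g \<and> admissible h}"
    then obtain g h where gh: "admissible g" "admissible h" and y: "y = ?F g h / (lpnorm p g * lpnorm q h)"
      by blast
    have "beta_p p U * lpnorm p g * lpnorm q h \<le> ?F g h"
      by (rule limit_bound[OF gh p[THEN less_imp_le] q1 pq beta_p_nonneg])
         (use bp_finite[OF U p gh] in \<open>simp add: q_def\<close>)
    moreover have "0 < lpnorm p g * lpnorm q h"
      using lpnorm_pos[OF gh(1), of p] lpnorm_pos[OF gh(2) q1] p by simp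
    ultimately have "beta_p p U \<le> y" unfolding y by (simp add: pos_le_divide_eq mult.assoc)
    then show "Inf {real (card (sumset (sumset A B) U)) / (real (card A) powr (1 / p) * real (card B) powr (1 - 1 / p)) | A B.
      finite A \<and> A \<noteq> {} \<and> finite B \<and> B \<noteq> {}} \<le> y" unfolding beta_p_def .
  qed
  have P2: "beta' U = gamma' (indicator U :: 'a \<Rightarrow> real)"
    unfolding gamma'_def
  proof (subst beta'_def, rule inf_eq)
    show "{real (card (sumset (sumset A B) U)) / sqrt (real (card A) * real (card B)) | A B.
      finite A \<and> A \<noteq> {} \<and> finite B \<and> B \<noteq> {} \<and> card A = card B} \<noteq> {}"
      using nonempty by blast
    show "{real (card (sumset (sumset A B) U)) / sqrt (real (card A) * real (card B)) | A B.
      finite A \<and> A \<noteq> {} \<and> finite B \<and> B \<noteq> {} \<and> card A = card B} \<subseteq>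
      {?F g h / (lpnorm 2 g * lpnorm 2 h) | g h. admissible g \<and> admissible h \<and> ident_distrib g h}"
    proof (rule subsetI)
      fix y assume "y \<in> {real (card (sumset (sumset A B) U)) / sqrt (real (card A) * real (card B)) | A B.
        finite A \<and> A \<noteq> {} \<and> finite B \<and> B \<noteq> {} \<and> card A = card B}"
      then obtain A B where AB: "finite A" "A \<noteq> {}" "finite B" "B \<noteq> {}" "card A = card B"
        and y: "y = real (card (sumset (sumset A B) U)) / sqrt (real (card A) * real (card B))"
        by blast
      have "y = ?F (indicator A) (indicator B) / (lpnorm 2 (indicator A) * lpnorm 2 (indicator B))"
        unfolding y ind_F[OF U AB(1,3)] ind_lpnorm[OF AB(1), of 2, simplified] ind_lpnorm[OF AB(3), of 2, simplified]
        by (simp add: powr_half_sqrt real_sqrt_mult)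
      moreover have "ident_distrib (indicator A :: 'a \<Rightarrow> real) (indicator B)"
        unfolding ident_distrib_def
      proof (intro allI impI)
        fix t :: real assume t: "0 < t"
        show "card {x. t \<le> (indicator A x :: real)} = card {x. t \<le> (indicator B x :: real)}"
        proof (cases "t \<le> 1")
          case True
          then have "{x. t \<le> (indicator A x :: real)} = A" "{x. t \<le> (indicator B x :: real)} = B"
            using t by (auto simp: indicator_def)
          then show ?thesis using AB(5) by simp
        next
          case False
          then have "{x. t \<le> (indicator A x :: real)} = {}" "{x. t \<le> (indicator B x :: real)} = {}"
            using t by (auto simp: indicator_def)
          then show ?thesis by simp
        qed
      qed
      ultimately show "y \<in> {?F g h / (lpnorm 2 g * lpnorm 2 h) | g h. admissible g \<and> admissible h \<and> ident_distrib g h}"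
        using ind_adm[OF AB(1,2)] ind_adm[OF AB(3,4)] by blast
    qed
    show "bdd_below {?F g h / (lpnorm 2 g * lpnorm 2 h) | g h. admissible g \<and> admissible h \<and> ident_distrib g h}"
      by (rule bdd_belowI[where m=0])
         (auto intro!: divide_nonneg_nonneg norm1_nonneg simp: lpnorm_nonneg)
    fix y assume "y \<in> {?F g h / (lpnorm 2 g * lpnorm 2 h) | g h. admissible g \<and> admissible h \<and> ident_distrib g h}"
    then obtain g h where gh: "admissible g" "admissible h" "ident_distrib g h"
      and y: "y = ?F g h / (lpnorm 2 g * lpnorm 2 h)"
      by blast
    have "beta' U * lpnorm 2 g * lpnorm 2 h \<le> ?F g h"
      by (rule limit_bound[OF gh(1,2) _ _ _ beta'_nonneg])
         (use b1_finite[OF U gh] in auto)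
    moreover have "0 < lpnorm 2 g * lpnorm 2 h"
      using lpnorm_pos[OF gh(1), of 2] lpnorm_pos[OF gh(2), of 2] by simp
    ultimately have "beta' U \<le> y" unfolding y by (simp add: pos_le_divide_eq mult.assoc)
    then show "Inf {real (card (sumset (sumset A B) U)) / sqrt (real (card A) * real (card B)) | A B.
      finite A \<and> A \<noteq> {} \<and> finite B \<and> B \<noteq> {} \<and> card A = card B} \<le> y" unfolding beta'_def .
  qed
  have P3: "beta'' U = gamma'' (indicator U :: 'a \<Rightarrow> real)"
    unfolding gamma''_def
  proof (subst beta''_def, rule inf_eq)
    show "{real (card (sumset (sumset A A) U)) / real (card A) | A. finite A \<and> A \<noteq> {}} \<noteq> {}"
      using nonempty by blast
    show "{real (card (sumset (sumset A A) U)) / real (card A) | A. finite A \<and> A \<noteq> {}} \<subseteq>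
      {?F g g / (lpnorm 2 g) ^ 2 | g. admissible g}"
    proof (rule subsetI)
      fix y assume "y \<in> {real (card (sumset (sumset A A) U)) / real (card A) | A. finite A \<and> A \<noteq> {}}"
      then obtain A where AB: "finite A" "A \<noteq> {}"
        and y: "y = real (card (sumset (sumset A A) U)) / real (card A)"
        by blast
      have "y = ?F (indicator A) (indicator A) / (lpnorm 2 (indicator A)) ^ 2"
        unfolding y ind_F[OF U AB(1,1)] ind_lpnorm[OF AB(1), of 2, simplified]
        by (simp add: powr_half_sqrt)
      then show "y \<in> {?F g g / (lpnorm 2 g) ^ 2 | g. admissible g}"
        using ind_adm[OF AB(1,2)] by blast
    qed
    show "bdd_below {?F g g / (lpnorm 2 g) ^ 2 | g. admissible g}"
      by (rule bdd_belowI[where m=0])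
         (auto intro!: divide_nonneg_nonneg norm1_nonneg simp: lpnorm_nonneg)
    fix y assume "y \<in> {?F g g / (lpnorm 2 g) ^ 2 | g. admissible g}"
    then obtain g where g: "admissible g" and y: "y = ?F g g / (lpnorm 2 g) ^ 2"
      by blast
    have "beta'' U * lpnorm 2 g * lpnorm 2 g \<le> ?F g g"
      by (rule limit_bound[OF g g _ _ _ beta''_nonneg])
         (use b2_finite[OF U g] in auto)
    moreover have "0 < lpnorm 2 g * lpnorm 2 g"
      using lpnorm_pos[OF g, of 2] by simp
    ultimately have "beta'' U \<le> y" unfolding y by (simp add: pos_le_divide_eq mult.assoc power2_eq_square)
    then show "Inf {real (card (sumset (sumset A A) U)) / real (card A) | A. finite A \<and> A \<noteq> {}} \<le> y"
      unfolding beta''_def .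
  qed
  show ?thesis using P1 P2 P3 by blast
qed


end
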